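(* For all integers $0\le k\le j$, $$\sum_{h=k}^j(-q)^{h-j}q^{k^2}{h\brack k}_+\,a^{-j}q^{j^2+h^2}\frac{(a^2q^{2-2j-2h};q^2)_j}{(q^2;q^2)_j}{j\brack h}_+=(-q)^{k-j}a^{-j}q^{2k^2+j^2}{j\brack k}_+\frac{(a^2q^{2-2j-2k};q^2)_k}{(q^2;q^2)_k}.$$
   Context: $(x;q^2)_n=\prod_{i=0}^{n-1}(1-xq^{2i})$, $(q^2;q^2)_n=\prod_{i=1}^n(1-q^{2i})$, and ${N\brack k}_+=\frac{(q^2;q^2)_N}{(q^2;q^2)_k(q^2;q^2)_{N-k}}$. (The identity expresses the reduced closure of a top twist applied to the basis web $UP[j,k]$.) *)

theory Defs
  imports Complex_Main
begin

definition qpoch2 :: "'a::field \<Rightarrow> 'a \<Rightarrow> nat \<Rightarrow> 'a" where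
  "qpoch2 x q n = (\<Prod>i<n. (1 - x * q ^ (2 * i)))"

definition qfact2 :: "'a::field \<Rightarrow> nat \<Rightarrow> 'a" where
  "qfact2 q n = (\<Prod>i=1..n. (1 - q ^ (2 * i)))"

text \<open>Gaussian binomial [N,k]_+ in base q^2 (used only for k \<le> N)\<close>
definition qbinp :: "'a::field \<Rightarrow> nat \<Rightarrow> nat \<Rightarrow> 'a" where
  "qbinp q N k = qfact2 q N / (qfact2 q k * qfact2 q (N - k))"

end

theory Submission imports Defs begin

fun G :: "'a::field \<Rightarrow> nat \<Rightarrow> nat \<Rightarrow> 'a" where
  "G s 0 m = (if m = 0 then 1 else 0)"
| "G s (Suc n) 0 = 1"
| "G s (Suc n) (Suc m) = G s n m + s^(2*Suc m) * G s n (Suc m)"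

lemma G_zero: "n < m \<Longrightarrow> G s n m = 0"
proof (induction n arbitrary: m)
  case 0 then show ?case by simp
next
  case (Suc n) then show ?case by (cases m) auto
qed

lemma qf_0[simp]: "qfact2 q 0 = 1" by (simp add: qfact2_def)

lemma qf_Suc: "qfact2 q (Suc n) = qfact2 q n * (1 - q^(2*Suc n))"
  by (simp add: qfact2_def prod.nat_ivl_Suc')

lemma qf_nz:
  assumes H: "\<forall>i::nat. i \<ge> 1 \<longrightarrow> q ^ (2 * i) \<noteq> 1"
  shows "qfact2 q n \<noteq> 0"
  using H by (induction n) (auto simp: qf_Suc)

lemma qf_add: "qfact2 q (a + n) = qfact2 q a * (\<Prod>i<n. (1 - q^(2*(a+1+i))))"
  by (induction n) (auto simp: qf_Suc ac_simps)

lemma alg: "\<And>N A B X Y::'a::field. A \<noteq> 0 \<Longrightarrow> B \<noteq> 0 \<Longrightarrow> 1 - X \<noteq> 0 \<Longrightarrow> 1 - Y \<noteq> 0 \<Longrightarrow>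
         N * (1 - X*Y) / (A*(1-X) * (B*(1-Y))) = N / (A * (B*(1-Y))) + X * (N / (A*(1-X) * B))"
proof -
  fix N A B X Y :: 'a
  assume a: "A \<noteq> 0" "B \<noteq> 0" "1 - X \<noteq> 0" "1 - Y \<noteq> 0"
  have "N / (A * (B*(1-Y))) + X * (N / (A*(1-X) * B)) = (N*(1-X) + X*N*(1-Y)) / (A*(1-X) * (B*(1-Y)))"
    using a by (simp add: add_divide_distrib)
  also have "N*(1-X) + X*N*(1-Y) = N * (1 - X*Y)" by (simp add: algebra_simps)
  finally show "N * (1 - X*Y) / (A*(1-X) * (B*(1-Y))) = N / (A * (B*(1-Y))) + X * (N / (A*(1-X) * B))" by simp
qed

lemma G_qbinp:
  assumes H: "\<forall>i::nat. i \<ge> 1 \<longrightarrow> s ^ (2 * i) \<noteq> 1"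
  shows "m \<le> n \<Longrightarrow> G s n m = qbinp s n m"
proof (induction n arbitrary: m)
  case 0 then show ?case by (simp add: qbinp_def)
next
  case (Suc n)
  have nz: "\<And>t. qfact2 s t \<noteq> 0" using qf_nz[OF H] .
  note IH = Suc.IH
  note prems = Suc.prems
  show ?case
  proof (cases m)
    case 0 then show ?thesis using nz by (simp add: qbinp_def)
  next
    case (Suc m')
    show ?thesis
    proof (cases "m' = n")
      case True
      then show ?thesis using Suc nz IH[of n] by (simp add: G_zero qbinp_def)
    next
      case False
      then obtain d where n: "n = m' + Suc d" using Suc prems
        by (metis Suc_le_mono add_Suc_right le_eq_less_or_eq less_imp_Suc_add)
      have e1: "G s n m' = qbinp s n m'" by (rule IH) (simp add: n)
      have e2: "G s n (Suc m') = qbinp s n (Suc m')" by (rule IH) (simp add: n)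
      have p1: "s^(2*Suc n) = s^(2*Suc m') * s^(2*Suc d)"
        using n by (simp add: power_add[symmetric])
      have a1: "1 - s^(2*Suc m') \<noteq> 0" using H by (metis One_nat_def Suc_le_mono le0 right_minus_eq)
      have a2: "1 - s^(2*Suc d) \<noteq> 0" using H by (metis One_nat_def Suc_le_mono le0 right_minus_eq)
      have d1: "Suc n - Suc m' = Suc d" "n - m' = Suc d" "n - Suc m' = d" using n by auto
      have "qbinp s (Suc n) m = qbinp s n m' + s^(2*Suc m') * qbinp s n (Suc m')"
        unfolding qbinp_def Suc d1 qf_Suc[of s n] qf_Suc[of s m'] qf_Suc[of s d] p1
        by (rule alg[OF nz nz a1 a2])
      then show ?thesis using Suc e1 e2 by simp
    qed
  qed
qed

lemma G_0[simp]: "G s n 0 = 1" by (cases n) auto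

lemma qbin: "(\<Prod>i<n. (1 + z * s^(2*i))) = (\<Sum>m\<le>n. G s n m * s^(m*(m-1)) * z^m)"
proof (induction n arbitrary: z)
  case 0 then show ?case by simp
next
  case (Suc n)
  have "(\<Prod>i<Suc n. (1 + z * s^(2*i))) = (1 + z) * (\<Prod>i<n. (1 + (z*s^2) * s^(2*i)))"
    by (subst prod.lessThan_Suc_shift) (simp add: power_add[symmetric] mult.assoc)
  also have "\<dots> = (1 + z) * (\<Sum>m\<le>n. G s n m * s^(m*(m-1)) * (z*s^2)^m)" using Suc by simp
  also have "\<dots> = (\<Sum>m\<le>n. G s n m * s^(m*(m+1)) * z^m) + (\<Sum>m\<le>n. G s n m * s^(m*(m+1)) * z^(Suc m))"
  proof -
    have e: "\<And>m. s^(m*(m-1)) * (z*s^2)^m = s^(m*(m+1)) * z^m"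
    proof -
      fix m :: nat
      have "m*(m+1) = m*(m-1) + 2*m" by (cases m) auto
      moreover have "(z*s^2)^m = z^m * s^(2*m)" by (simp add: power_mult_distrib power_mult)
      ultimately show "s^(m*(m-1)) * (z*s^2)^m = s^(m*(m+1)) * z^m"
        by (simp only: power_add) (simp add: algebra_simps)
    qed
    have e2: "\<And>m. G s n m * s^(m*(m-1)) * (z*s^2)^m = G s n m * s^(m*(m+1)) * z^m"
      using e by (simp add: mult.assoc)
    show ?thesis by (simp only: e2 distrib_right sum_distrib_left mult_1_left sum.distrib) (simp add: algebra_simps)
  qed
  also have "(\<Sum>m\<le>n. G s n m * s^(m*(m+1)) * z^m) = (\<Sum>m\<le>Suc n. G s n m * s^(m*(m+1)) * z^m)"
    by (simp add: G_zero)
  also have "\<dots> = 1 + (\<Sum>m\<le>n. s^(2*Suc m) * G s n (Suc m) * s^(Suc m*m) * z^(Suc m))"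
  proof -
    have pe: "\<And>m. s^((Suc m)*(Suc m+1)) = s^(2*Suc m) * s^(Suc m*m)"
    proof -
      fix m :: nat
      have "(Suc m)*(Suc m+1) = 2*Suc m + Suc m*m" by simp
      then show "s^((Suc m)*(Suc m+1)) = s^(2*Suc m) * s^(Suc m*m)" by (simp only: power_add)
    qed
    show ?thesis
      by (subst sum.atMost_Suc_shift) (simp only: pe G_0, simp add: algebra_simps)
  qed
  finally have L: "(\<Prod>i<Suc n. (1 + z * s^(2*i))) = 1 + (\<Sum>m\<le>n. s^(2*Suc m) * G s n (Suc m) * s^(Suc m*m) * z^(Suc m)) + (\<Sum>m\<le>n. G s n m * s^(m*(m+1)) * z^(Suc m))" by simp
  have R: "(\<Sum>m\<le>Suc n. G s (Suc n) m * s^(m*(m-1)) * z^m) = 1 + (\<Sum>m\<le>n. (G s n m + s^(2*Suc m) * G s n (Suc m)) * s^(Suc m*m) * z^(Suc m))"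
    by (subst sum.atMost_Suc_shift) simp
  show ?case unfolding L R by (simp add: distrib_right sum.distrib algebra_simps)
qed

lemma core:
  fixes q r x :: "'a::field"
  assumes H: "\<forall>i::nat. i \<ge> 1 \<longrightarrow> q ^ (2 * i) \<noteq> 1" and qr: "q * r = 1"
  shows "(\<Sum>m\<le>n. (-1)^m * q^(m*(m-1)) * q^(2*m+2*k*m) * G q n m *
            (\<Prod>i<n+k. (1 - x*q^2*r^(2*(n+k)+2*(k+m))*q^(2*i))))
       = qfact2 q (n+k) / qfact2 q k * (\<Prod>i<k. (1 - x*q^2*r^(2*(n+k)+2*k)*q^(2*i)))"
proof -
  define j where "j = n + k"
  define c where "c = -(x*q^2*r^(2*(n+k)+2*k))"
  define E where "E s = (\<Prod>i<n. (1 + (-(q^(2+2*k)*r^(2*s))) * q^(2*i)))" for s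
  have nz: "\<And>t. qfact2 q t \<noteq> 0" using qf_nz[OF H] .
  have qrp: "\<And>t. q^t * r^t = 1" using qr by (metis power_mult_distrib power_one)
  have S1: "(\<Prod>i<n+k. (1 - x*q^2*r^(2*(n+k)+2*(k+m))*q^(2*i)))
       = (\<Sum>s\<le>j. G q j s * q^(s*(s-1)) * c^s * (r^(2*s))^m)" for m
  proof -
    have "(\<Prod>i<n+k. (1 - x*q^2*r^(2*(n+k)+2*(k+m))*q^(2*i))) = (\<Prod>i<j. (1 + (c*r^(2*m))*q^(2*i)))"
    proof -
      have "2*(n+k)+2*(k+m) = (2*(n+k)+2*k) + 2*m" by simp
      then have pr: "r^(2*(n+k)+2*(k+m)) = r^(2*(n+k)+2*k) * r^(2*m)" by (metis power_add)
      show ?thesis unfolding j_def c_def pr by (simp add: algebra_simps)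
    qed
    also have "\<dots> = (\<Sum>s\<le>j. G q j s * q^(s*(s-1)) * (c*r^(2*m))^s)" by (rule qbin)
    also have "\<dots> = (\<Sum>s\<le>j. G q j s * q^(s*(s-1)) * c^s * (r^(2*s))^m)"
    proof (rule sum.cong)
      fix s
      have e: "2*m*s = 2*s*m" by simp
      have "(c*r^(2*m))^s = c^s * (r^(2*s))^m"
        by (simp only: power_mult_distrib power_mult[symmetric] e)
      then show "G q j s * q^(s*(s-1)) * (c*r^(2*m))^s = G q j s * q^(s*(s-1)) * c^s * (r^(2*s))^m" by simp
    qed simp
    finally show ?thesis .
  qed
  have S2e: "E s = (\<Sum>m\<le>n. (-1)^m * q^(m*(m-1)) * q^(2*m+2*k*m) * G q n m * (r^(2*s))^m)" for s
  proof -
    have "E s = (\<Sum>m\<le>n. G q n m * q^(m*(m-1)) * (-(q^(2+2*k)*r^(2*s)))^m)"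
      unfolding E_def by (rule qbin)
    also have "\<dots> = (\<Sum>m\<le>n. (-1)^m * q^(m*(m-1)) * q^(2*m+2*k*m) * G q n m * (r^(2*s))^m)"
    proof (rule sum.cong)
      fix m
      have "(2+2*k)*m = 2*m+2*k*m" by (simp add: algebra_simps)
      then have "q^(2*m+2*k*m) = (q^(2+2*k))^m" by (metis power_mult)
      moreover have "(-(q^(2+2*k)*r^(2*s)))^m = (-1)^m * (q^(2+2*k))^m * (r^(2*s))^m"
        by (subst power_minus) (simp only: power_mult_distrib mult.assoc)
      ultimately show "G q n m * q^(m*(m-1)) * (-(q^(2+2*k)*r^(2*s)))^m = (-1)^m * q^(m*(m-1)) * q^(2*m+2*k*m) * G q n m * (r^(2*s))^m"
        by (simp only: ac_simps)
    qed simp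
    finally show ?thesis .
  qed
  have S2: "(\<Sum>m\<le>n. (-1)^m * q^(m*(m-1)) * q^(2*m+2*k*m) * G q n m *
            (\<Prod>i<n+k. (1 - x*q^2*r^(2*(n+k)+2*(k+m))*q^(2*i))))
      = (\<Sum>s\<le>j. G q j s * q^(s*(s-1)) * c^s * E s)"
    unfolding S1 S2e sum_distrib_left
    by (subst sum.swap) (simp only: ac_simps)
  have S3: "E s = 0" if "k < s" "s \<le> j" for s
  proof -
    have i: "s - k - 1 < n" using that unfolding j_def by auto
    have "q^(2+2*k)*r^(2*s) * q^(2*(s-k-1)) = q^(2*s)*r^(2*s)"
    proof -
      have ee: "2+2*k + 2*(s-k-1) = 2*s" using that by auto
      have "q^(2+2*k)*r^(2*s)*q^(2*(s-k-1)) = q^(2+2*k + 2*(s-k-1)) * r^(2*s)"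
        by (simp only: power_add ac_simps)
      then show ?thesis unfolding ee .
    qed
    then have "1 + (-(q^(2+2*k)*r^(2*s))) * q^(2*(s-k-1)) = 0" using qrp by simp
    then show ?thesis unfolding E_def using i by (auto intro!: prod_zero)
  qed
  have S4: "E s = qfact2 q (j - s) / qfact2 q (k - s)" if "s \<le> k" for s
  proof -
    have "E s = (\<Prod>i<n. (1 - q^(2*((k-s)+1+i))))"
      unfolding E_def
    proof (rule prod.cong)
      fix i
      have "2*((k-s)+1+i) + 2*s = 2+2*k + 2*i" using that by auto
      moreover have "q^(2+2*k)*r^(2*s)*q^(2*i) = q^(2+2*k + 2*i) * r^(2*s)"
        by (simp only: power_add ac_simps)
      moreover have "q^(2*((k-s)+1+i)) * (q^(2*s)*r^(2*s)) = q^(2*((k-s)+1+i) + 2*s) * r^(2*s)"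
        by (simp only: power_add ac_simps)
      ultimately have "q^(2+2*k)*r^(2*s)*q^(2*i) = q^(2*((k-s)+1+i)) * (q^(2*s)*r^(2*s))"
        by (metis (no_types))
      then show "1 + (-(q^(2+2*k)*r^(2*s))) * q^(2*i) = 1 - q^(2*((k-s)+1+i))" using qrp by simp
    qed simp
    moreover have "qfact2 q (j - s) = qfact2 q (k-s) * (\<Prod>i<n. (1 - q^(2*((k-s)+1+i))))"
      using qf_add[of q "k-s" n] that unfolding j_def by (simp add: add.commute)
    ultimately show ?thesis using nz by simp
  qed
  have S5: "(\<Sum>s\<le>j. G q j s * q^(s*(s-1)) * c^s * E s) = (\<Sum>s\<le>k. G q j s * q^(s*(s-1)) * c^s * E s)"
    by (rule sum.mono_neutral_right) (auto simp: S3 j_def)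
  have S6: "(\<Prod>i<k. (1 - x*q^2*r^(2*(n+k)+2*k)*q^(2*i))) = (\<Sum>s\<le>k. G q k s * q^(s*(s-1)) * c^s)"
  proof -
    have "(\<Prod>i<k. (1 - x*q^2*r^(2*(n+k)+2*k)*q^(2*i))) = (\<Prod>i<k. (1 + c*q^(2*i)))"
      unfolding c_def by simp
    then show ?thesis using qbin by simp
  qed
  have S7: "G q j s * E s = qfact2 q j / qfact2 q k * G q k s" if "s \<le> k" for s
  proof -
    have "s \<le> j" using that unfolding j_def by simp
    then show ?thesis using that nz unfolding S4[OF that] G_qbinp[OF H that] G_qbinp[OF H \<open>s \<le> j\<close>] qbinp_def
      by (simp add: field_simps)
  qed
  show ?thesis
    unfolding S2 S5 S6 sum_distrib_left
  proof (rule sum.cong)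
    fix s assume "s \<in> {..k}"
    then have sk: "s \<le> k" by simp
    have "G q j s * q^(s*(s-1)) * c^s * E s = (G q j s * E s) * (q^(s*(s-1)) * c^s)" by (simp only: ac_simps)
    also have "\<dots> = qfact2 q j / qfact2 q k * (G q k s * q^(s*(s-1)) * c^s)" unfolding S7[OF sk] by (simp only: ac_simps)
    finally show "G q j s * q^(s*(s-1)) * c^s * E s = qfact2 q (n+k) / qfact2 q k * (G q k s * q^(s*(s-1)) * c^s)"
      unfolding j_def .
  qed simp
qed
lemma powi_neg2:
  fixes q :: "'a::field"
  assumes "q \<noteq> 0"
  shows "q powi (2 - 2 * int j - 2 * int h) = q^2 * inverse q ^ (2*j+2*h)"
proof -
  have e: "(2 - 2 * int j - 2 * int h) = 2 + (- int (2*j+2*h))" by simp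
  have "q powi (2 - 2 * int j - 2 * int h) = q powi 2 * q powi (- int (2*j+2*h))"
    unfolding e by (rule power_int_add) (simp add: assms)
  also have "\<dots> = q^2 * inverse q ^ (2*j+2*h)"
    by (simp only: power_int_minus power_int_of_nat power_inverse power_int_numeral)
  finally show ?thesis .
qed

lemma powi_shift:
  fixes q :: "'a::field"
  assumes "q \<noteq> 0"
  shows "(-q) powi (int (m+k) - int j) = (-q) powi (int k - int j) * (-q)^m"
proof -
  have e: "int (m+k) - int j = (int k - int j) + int m" by simp
  have "(-q) powi ((int k - int j) + int m) = (-q) powi (int k - int j) * (-q) powi (int m)"
    by (rule power_int_add) (simp add: assms)
  then show ?thesis unfolding e by simp
qed

theorem mainTheorem7:
  fixes a q :: "'a::field"
  fixes j k :: nat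
  assumes "a \<noteq> 0" and "q \<noteq> 0"
    and "\<forall>i::nat. i \<ge> 1 \<longrightarrow> q ^ (2 * i) \<noteq> 1"
    and "k \<le> j"
  shows "(\<Sum>h=k..j. (-q) powi (int h - int j) * q ^ (k^2) * qbinp q h k
            * a powi (- int j) * q ^ (j^2 + h^2)
            * qpoch2 (a^2 * q powi (2 - 2 * int j - 2 * int h)) q j / qfact2 q j
            * qbinp q j h)
         = (-q) powi (int k - int j) * a powi (- int j) * q ^ (2 * k^2 + j^2)
            * qbinp q j k
            * qpoch2 (a^2 * q powi (2 - 2 * int j - 2 * int k)) q k / qfact2 q k"
proof -
  note H = assms(3)
  obtain n where jn: "j = n + k" using assms(4) le_Suc_ex by (metis add.commute)
  define r where "r = inverse q"
  define x where "x = a^2"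
  have qr: "q * r = 1" unfolding r_def using assms(2) by simp
  have nz: "\<And>t. qfact2 q t \<noteq> 0" using qf_nz[OF H] .
  define C where "C = (-q) powi (int k - int j) * a powi (- int j) * q ^ (2 * k^2 + j^2) * qbinp q j k / qfact2 q j"
  define T where "T m = (-1)^m * q^(m*(m-1)) * q^(2*m+2*k*m) * G q n m *
            (\<Prod>i<n+k. (1 - x*q^2*r^(2*(n+k)+2*(k+m))*q^(2*i)))" for m
  have qp: "qpoch2 (a^2 * q powi (2 - 2 * int j - 2 * int h)) q N = (\<Prod>i<N. (1 - x*q^2*r^(2*j+2*h)*q^(2*i)))" for h N
    unfolding qpoch2_def powi_neg2[OF assms(2)] r_def x_def by (simp add: ac_simps)
  have bin: "qbinp q (m+k) k * qbinp q j (m+k) = qbinp q j k * G q n m" if "m \<le> n" for m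
  proof -
    have e: "m + k - k = m" "j - (m+k) = n - m" "j - k = n" using jn that by auto
    show ?thesis unfolding G_qbinp[OF H that] qbinp_def e using nz by (simp add: field_simps)
  qed
  have tm: "(-q) powi (int (m+k) - int j) * q ^ (k^2) * qbinp q (m+k) k
            * a powi (- int j) * q ^ (j^2 + (m+k)^2)
            * qpoch2 (a^2 * q powi (2 - 2 * int j - 2 * int (m+k))) q j / qfact2 q j
            * qbinp q j (m+k) = C * T m" if "m \<le> n" for m
  proof -
    have e1: "(-q)^m * q^(j^2 + (m+k)^2) * q^(k^2) = (-1)^m * q^(m*(m-1)) * q^(2*m+2*k*m) * q ^ (2 * k^2 + j^2)"
    proof -
      have "m + (j^2 + (m+k)^2) + k^2 = m*(m-1) + (2*m+2*k*m) + (2 * k^2 + j^2)"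
        by (cases m) (simp_all add: power2_eq_square algebra_simps)
      then have "q^m * q^(j^2 + (m+k)^2) * q^(k^2) = q^(m*(m-1)) * q^(2*m+2*k*m) * q ^ (2 * k^2 + j^2)"
        by (metis power_add)
      then show ?thesis by (simp add: power_minus[of q] ac_simps)
    qed
    have "(-q) powi (int (m+k) - int j) * q ^ (k^2) * qbinp q (m+k) k
            * a powi (- int j) * q ^ (j^2 + (m+k)^2)
            * qpoch2 (a^2 * q powi (2 - 2 * int j - 2 * int (m+k))) q j / qfact2 q j
            * qbinp q j (m+k)
        = (-q) powi (int k - int j) * a powi (- int j) / qfact2 q j
          * ((-q)^m * q^(j^2 + (m+k)^2) * q^(k^2))
          * (qbinp q (m+k) k * qbinp q j (m+k))
          * qpoch2 (a^2 * q powi (2 - 2 * int j - 2 * int (m+k))) q j"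
      unfolding powi_shift[OF assms(2)] by (simp add: ac_simps)
    also have "\<dots> = (-q) powi (int k - int j) * a powi (- int j) / qfact2 q j
          * ((-1)^m * q^(m*(m-1)) * q^(2*m+2*k*m) * q ^ (2 * k^2 + j^2))
          * (qbinp q j k * G q n m)
          * (\<Prod>i<j. (1 - x*q^2*r^(2*j+2*(m+k))*q^(2*i)))"
      unfolding e1 bin[OF that] qp by (rule refl)
    also have "\<dots> = C * T m"
      unfolding C_def T_def jn by (simp add: ac_simps)
    finally show ?thesis .
  qed
  have "(\<Sum>h=k..j. (-q) powi (int h - int j) * q ^ (k^2) * qbinp q h k
            * a powi (- int j) * q ^ (j^2 + h^2)
            * qpoch2 (a^2 * q powi (2 - 2 * int j - 2 * int h)) q j / qfact2 q j
            * qbinp q j h) = (\<Sum>m\<le>n. C * T m)"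
    unfolding jn sum.shift_bounds_cl_nat_ivl[of _ 0 k n, simplified] atLeast0AtMost[symmetric]
    using tm unfolding jn by (intro sum.cong) auto
  also have "\<dots> = C * (qfact2 q (n+k) / qfact2 q k * (\<Prod>i<k. (1 - x*q^2*r^(2*(n+k)+2*k)*q^(2*i))))"
    unfolding sum_distrib_left[symmetric] T_def using core[OF H qr] by simp
  also have "\<dots> = (-q) powi (int k - int j) * a powi (- int j) * q ^ (2 * k^2 + j^2)
            * qbinp q j k
            * qpoch2 (a^2 * q powi (2 - 2 * int j - 2 * int k)) q k / qfact2 q k"
    unfolding qp unfolding C_def jn using nz by (simp add: field_simps)
  finally show ?thesis .
qed

end
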